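(* Let $c\ge 1$ and $g\ge 2$. The free-nilpotent complex Lie algebra $N(c,g)$ admits a periodic prederivation if and only if $c\le 2$, or $c=3$ and $g=2$.
   Context: $N(c,g)$ denotes the free-nilpotent complex Lie algebra of nilpotency class $c$ on $g$ generators. A linear map $P:\mathfrak{g}\to\mathfrak{g}$ is a prederivation if $P([x,[y,z]])=[P(x),[y,z]]+[x,[P(y),z]]+[x,[y,P(z)]]$ for all $x,y,z\in\mathfrak{g}$; it is periodic if $P^m=\mathrm{id}$ for some integer $m\ge 1$. *)

theory Defs
  imports Complex_Main
begin

text \<open>Elements of the truncated free associative algebra over the letters 0..g-1:
  functions from words (nat lists) to complex coefficients; all coefficients of
  words of length greater than c are killed by the truncated product.
  N(c,g) is the Lie subalgebra (under the commutator bracket) generated by the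
  g letters. This is the free Lie algebra on g generators modulo its (c+1)-st
  lower central series term.\<close>

type_synonym tpoly = "nat list \<Rightarrow> complex"

definition tmult :: "nat \<Rightarrow> tpoly \<Rightarrow> tpoly \<Rightarrow> tpoly" where
  "tmult c a b = (\<lambda>w. if length w \<le> c
      then (\<Sum>k\<in>{0..length w}. a (take k w) * b (drop k w)) else 0)"

definition lbr :: "nat \<Rightarrow> tpoly \<Rightarrow> tpoly \<Rightarrow> tpoly" where
  "lbr c a b = (\<lambda>w. tmult c a b w - tmult c b a w)"

definition gen :: "nat \<Rightarrow> tpoly" where
  "gen i = (\<lambda>w. if w = [i] then 1 else 0)"

inductive_set freeNil :: "nat \<Rightarrow> nat \<Rightarrow> tpoly set" for c g where
  gen_in: "i < g \<Longrightarrow> gen i \<in> freeNil c g"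
| zero_in: "(\<lambda>w. 0) \<in> freeNil c g"
| add_in: "x \<in> freeNil c g \<Longrightarrow> y \<in> freeNil c g \<Longrightarrow> (\<lambda>w. x w + y w) \<in> freeNil c g"
| smult_in: "x \<in> freeNil c g \<Longrightarrow> (\<lambda>w. a * x w) \<in> freeNil c g"
| br_in: "x \<in> freeNil c g \<Longrightarrow> y \<in> freeNil c g \<Longrightarrow> lbr c x y \<in> freeNil c g"

definition prederivation :: "nat \<Rightarrow> nat \<Rightarrow> (tpoly \<Rightarrow> tpoly) \<Rightarrow> bool" where
  "prederivation c g P \<longleftrightarrow>
     (\<forall>x\<in>freeNil c g. P x \<in> freeNil c g) \<and>
     (\<forall>x\<in>freeNil c g. \<forall>y\<in>freeNil c g. \<forall>a b::complex.
        P (\<lambda>w. a * x w + b * y w) = (\<lambda>w. a * P x w + b * P y w)) \<and>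
     (\<forall>x\<in>freeNil c g. \<forall>y\<in>freeNil c g. \<forall>z\<in>freeNil c g.
        P (lbr c x (lbr c y z)) =
          (\<lambda>w. lbr c (P x) (lbr c y z) w + lbr c x (lbr c (P y) z) w
                  + lbr c x (lbr c y (P z)) w))"

definition periodic_prederivation :: "nat \<Rightarrow> nat \<Rightarrow> (tpoly \<Rightarrow> tpoly) \<Rightarrow> bool" where
  "periodic_prederivation c g P \<longleftrightarrow> prederivation c g P \<and>
     (\<exists>m::nat. m \<ge> 1 \<and> (\<forall>x\<in>freeNil c g. (P ^^ m) x = x))"

end

theory Submission
  imports Defs
begin


fun tm :: "tpoly \<Rightarrow> tpoly \<Rightarrow> nat list \<Rightarrow> complex" where
  "tm a b [] = a [] * b []"
| "tm a b (x#w) = a [] * b (x#w) + tm (\<lambda>v. a (x#v)) b w"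

lemma tm_sum: "(\<Sum>k\<in>{0..length w}. a (take k w) * b (drop k w)) = tm a b w"
proof (induction w arbitrary: a)
  case Nil then show ?case by simp
next
  case (Cons x w)
  have "(\<Sum>k\<in>{0..length (x#w)}. a (take k (x#w)) * b (drop k (x#w)))
     = a [] * b (x#w) + (\<Sum>k\<in>{0..length w}. a (x # take k w) * b (drop k w))"
    by (simp add: atLeast0AtMost sum.atMost_Suc_shift del: sum.atMost_Suc)
  also have "\<dots> = tm a b (x#w)" using Cons[of "\<lambda>v. a (x#v)"] by simp
  finally show ?case .
qed

lemma tmult_tm: "tmult c a b w = (if length w \<le> c then tm a b w else 0)"
  by (simp add: tmult_def tm_sum)

lemma lbr_tm: "lbr c a b w = (if length w \<le> c then tm a b w - tm b a w else 0)"
  by (simp add: lbr_def tmult_tm)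

lemma fN_nil: "x \<in> freeNil c g \<Longrightarrow> x [] = 0"
  by (induction rule: freeNil.induct) (auto simp: gen_def lbr_tm)

lemma fN_supp: "x \<in> freeNil c g \<Longrightarrow> \<exists>l\<in>set w. l \<ge> g \<Longrightarrow> x w = 0"
proof (induction arbitrary: w rule: freeNil.induct)
  case (gen_in i) then show ?case by (auto simp: gen_def)
next
  case (br_in x y)
  have "\<And>k. x (take k w) * y (drop k w) = 0"
  proof -
    fix k
    from br_in.prems obtain l where l: "l \<in> set w" "l \<ge> g" by auto
    have "l \<in> set (take k w) \<or> l \<in> set (drop k w)"
      using l(1) by (metis append_take_drop_id in_set_conv_decomp list.set_intros(1) set_append UnE)
    then show "x (take k w) * y (drop k w) = 0" using br_in.IH l(2) by auto
  qed
  moreover have "\<And>k. y (take k w) * x (drop k w) = 0"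
  proof -
    fix k
    from br_in.prems obtain l where l: "l \<in> set w" "l \<ge> g" by auto
    have "l \<in> set (take k w) \<or> l \<in> set (drop k w)"
      using l(1) by (metis append_take_drop_id set_append UnE)
    then show "y (take k w) * x (drop k w) = 0" using br_in.IH l(2) by auto
  qed
  ultimately show ?case by (simp add: lbr_def tmult_def del: mult_eq_0_iff)
qed auto

lemma fN_anti: "x \<in> freeNil c g \<Longrightarrow> 2 \<le> c \<Longrightarrow> x [i,j] = - x [j,i]"
proof (induction rule: freeNil.induct)
  case (br_in x y)
  then show ?case using fN_nil[OF br_in.hyps(1)] fN_nil[OF br_in.hyps(2)]
    by (simp add: lbr_tm algebra_simps)
qed (auto simp: gen_def)

lemma T3: assumes "3 \<le> c" "x [] = 0" "y [] = 0" "z [] = 0"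
  shows "lbr c x (lbr c y z) [i,j,k] = x[i]*(y[j]*z[k] - z[j]*y[k]) - (y[i]*z[j]-z[i]*y[j])*x[k]"
  using assms by (simp add: lbr_tm algebra_simps)



lemma T_zero_c2: assumes "c \<le> 2" "x [] = 0" "y [] = 0" "z [] = 0"
  shows "lbr c x (lbr c y z) = (\<lambda>w. 0)"
proof
  fix w
  show "lbr c x (lbr c y z) w = 0"
  proof (cases "length w \<le> c")
    case True
    then have "w = [] \<or> (\<exists>a. w = [a]) \<or> (\<exists>a b. w = [a,b])" using assms(1)
      by (cases w; cases "tl w"; cases "tl (tl w)") auto
    then show ?thesis using assms by (auto simp: lbr_tm)
  qed (simp add: lbr_tm)
qed

lemma if_c2: assumes "c \<le> 2" shows "periodic_prederivation c g id"
  unfolding periodic_prederivation_def prederivation_def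
proof (intro conjI ballI allI)
  show "\<exists>m::nat. m \<ge> 1 \<and> (\<forall>x\<in>freeNil c g. (id ^^ m) x = x)" by (rule exI[of _ 1]) simp
next
  fix x y z assume xyz: "x \<in> freeNil c g" "y \<in> freeNil c g" "z \<in> freeNil c g"
  show "id (lbr c x (lbr c y z)) = (\<lambda>w. lbr c (id x) (lbr c y z) w + lbr c x (lbr c (id y) z) w
                  + lbr c x (lbr c y (id z)) w)"
    using T_zero_c2[of c x y z] assms fN_nil[OF xyz(1)] fN_nil[OF xyz(2)] fN_nil[OF xyz(3)] by simp
qed auto

definition chi :: "nat \<Rightarrow> complex" where "chi l = (if l = 0 then \<i> else - \<i>)"
definition phi :: "nat list \<Rightarrow> complex" where "phi w = prod_list (map chi w)"
definition Pc :: "tpoly \<Rightarrow> tpoly" where "Pc f = (\<lambda>w. phi w * f w)"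

lemma phi_split: "phi (take k w) * phi (drop k w) = phi w"
  unfolding phi_def by (metis append_take_drop_id map_append prod_list.append)

lemma Pc_tmult: "tmult c (Pc a) (Pc b) = Pc (tmult c a b)"
proof
  fix w
  have h: "\<And>k. phi (take k w) * a (take k w) * (phi (drop k w) * b (drop k w)) = phi w * (a (take k w) * b (drop k w))"
    using phi_split by (metis mult.assoc mult.left_commute)
  show "tmult c (Pc a) (Pc b) w = Pc (tmult c a b) w"
    by (simp add: tmult_def Pc_def sum_distrib_left h del: mult_eq_0_iff)
qed

lemma Pc_lbr: "lbr c (Pc a) (Pc b) = Pc (lbr c a b)"
  unfolding lbr_def Pc_tmult by (simp add: Pc_def algebra_simps)

lemma Pc_fN: "x \<in> freeNil c g \<Longrightarrow> Pc x \<in> freeNil c g"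
proof (induction rule: freeNil.induct)
  case (gen_in i)
  have "Pc (gen i) = (\<lambda>w. chi i * gen i w)" by (auto simp: Pc_def gen_def phi_def)
  then show ?case using freeNil.smult_in[OF freeNil.gen_in[OF gen_in]] by simp
next
  case zero_in
  then show ?case using freeNil.zero_in by (simp add: Pc_def)
next
  case (add_in x y)
  have "Pc (\<lambda>w. x w + y w) = (\<lambda>w. Pc x w + Pc y w)" by (simp add: Pc_def algebra_simps)
  then show ?case using freeNil.add_in[OF add_in.IH] by simp
next
  case (smult_in x a)
  have "Pc (\<lambda>w. a * x w) = (\<lambda>w. a * Pc x w)" by (simp add: Pc_def algebra_simps)
  then show ?case using freeNil.smult_in[OF smult_in.IH] by simp
next
  case (br_in x y)
  then show ?case using freeNil.br_in[OF br_in.IH] by (simp add: Pc_lbr)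
qed

lemma Pc_pow: "(Pc ^^ n) f = (\<lambda>w. phi w ^ n * f w)"
  by (induction n) (auto simp: Pc_def)

lemma phi4: "phi w ^ 4 = 1"
  unfolding phi_def by (induction w) (auto simp: chi_def power_mult_distrib)

lemma Pc_per: "(Pc ^^ 4) f = f"
  by (simp add: Pc_pow phi4)

lemma if_c3: assumes "g = 2" shows "periodic_prederivation 3 g Pc"
  unfolding periodic_prederivation_def prederivation_def
proof (intro conjI ballI allI)
  show "\<exists>m::nat. m \<ge> 1 \<and> (\<forall>x\<in>freeNil 3 g. (Pc ^^ m) x = x)"
    by (rule exI[of _ 4]) (simp add: Pc_per)
next
  fix x assume "x \<in> freeNil 3 g" then show "Pc x \<in> freeNil 3 g" by (rule Pc_fN)
next
  fix x y a b show "Pc (\<lambda>w. a * x w + b * y w) = (\<lambda>w. a * Pc x w + b * Pc y w)"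
    by (simp add: Pc_def algebra_simps)
next
  fix x y z assume xyz: "x \<in> freeNil 3 g" "y \<in> freeNil 3 g" "z \<in> freeNil 3 g"
  note nil = fN_nil[OF xyz(1)] fN_nil[OF xyz(2)] fN_nil[OF xyz(3)]
  have s: "\<And>l. 2 \<le> l \<Longrightarrow> x [l] = 0 \<and> y [l] = 0 \<and> z [l] = 0"
    using fN_supp[OF xyz(1)] fN_supp[OF xyz(2)] fN_supp[OF xyz(3)] assms by auto
  show "Pc (lbr 3 x (lbr 3 y z)) = (\<lambda>w. lbr 3 (Pc x) (lbr 3 y z) w + lbr 3 x (lbr 3 (Pc y) z) w
                  + lbr 3 x (lbr 3 y (Pc z)) w)"
  proof
    fix w :: "nat list"
    consider "length w \<noteq> 3" | a b d where "w = [a,b,d]"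
      by (cases w; cases "tl w"; cases "tl (tl w)"; cases "tl (tl (tl w))") auto
    then show "Pc (lbr 3 x (lbr 3 y z)) w = lbr 3 (Pc x) (lbr 3 y z) w + lbr 3 x (lbr 3 (Pc y) z) w
                  + lbr 3 x (lbr 3 y (Pc z)) w"
    proof cases
      case 1
      have h: "(u::tpoly) [] = 0 \<Longrightarrow> v [] = 0 \<Longrightarrow> r [] = 0 \<Longrightarrow> lbr 3 u (lbr 3 v r) w = 0" for u v r
      proof (cases "length w \<le> 3")
        case True
        assume "u [] = 0" "v [] = 0" "r [] = 0"
        moreover have "w = [] \<or> (\<exists>a. w = [a]) \<or> (\<exists>a b. w = [a,b])" using True 1
          by (cases w; cases "tl w"; cases "tl (tl w)") auto
        ultimately show ?thesis by (auto simp: lbr_tm)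
      qed (simp add: lbr_tm)
      have pn: "\<And>u. u [] = 0 \<Longrightarrow> Pc u [] = 0" by (simp add: Pc_def)
      show ?thesis using nil by (simp add: h pn Pc_def[of "lbr 3 x (lbr 3 y z)"])
    next
      case 2
      have e: "\<And>l. chi l = (if l = 0 then \<i> else -\<i>)" by (simp add: chi_def)
      show ?thesis unfolding 2 using nil
        apply (simp add: T3 Pc_def phi_def)
        apply (cases "a = 0"; cases "a = 1"; cases "b = 0"; cases "b = 1"; cases "d = 0"; cases "d = 1")
        apply (auto simp: chi_def s algebra_simps)
        done
    qed
  qed
qed



lemma roots_sum: assumes "0 < k" "k < m" shows "(\<Sum>z\<in>{z::complex. z ^ m = 1}. z ^ k) = 0"
proof -
  have m: "m > 0" using assms by simp
  define \<omega> where "\<omega> = cis (2 * pi * real k / real m)"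
  have "\<omega> \<noteq> 1"
  proof
    assume "\<omega> = 1"
    then have "cis (2 * pi * real k / real m) = cis (2 * pi * real 0 / real m)" by (simp add: \<omega>_def)
    with bij_betw_roots_unity[OF m] assms have "k = 0" unfolding bij_betw_def inj_on_def by auto
    with assms show False by simp
  qed
  have wm: "\<omega> ^ m = 1" using m by (simp add: \<omega>_def DeMoivre cis_multiple_2pi)
  have "(\<Sum>z\<in>{z::complex. z ^ m = 1}. z ^ k) = (\<Sum>i<m. cis (2 * pi * real i / real m) ^ k)"
    using m by (intro sum.reindex_bij_betw [symmetric] bij_betw_roots_unity) auto
  also have "\<dots> = (\<Sum>i<m. \<omega> ^ i)"
    by (intro sum.cong refl) (auto simp: \<omega>_def DeMoivre mult_ac)
  also have "\<dots> = (\<omega> ^ m - 1) / (\<omega> - 1)"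
    using \<open>\<omega> \<noteq> 1\<close> by (subst geometric_sum) auto
  also have "\<dots> = 0" using wm by simp
  finally show ?thesis .
qed

lemma roots_sum_m: assumes "0 < m" shows "(\<Sum>z\<in>{z::complex. z ^ m = 1}. z ^ m) = of_nat m"
  using card_roots_unity_eq[OF assms] by simp

lemma unit_lemma: fixes a b :: complex
  assumes "norm a = 1" "norm b = 1" "norm (a + a + b) = 1" shows "b = - a"
proof -
  obtain p q r s where ab: "a = Complex p q" "b = Complex r s" by (metis complex.exhaust)
  have e1: "p^2 + q^2 = 1" using assms(1) ab by (simp add: norm_complex_def)
  have e2: "r^2 + s^2 = 1" using assms(2) ab by (simp add: norm_complex_def)
  have e3: "(2*p+r)^2 + (2*q+s)^2 = 1" using assms(3) ab by (simp add: norm_complex_def)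
  have "(p+r)^2 + (q+s)^2 = 0" using e1 e2 e3 by (simp add: power2_eq_square algebra_simps) 
  then have "p + r = 0" "q + s = 0" by (simp_all add: sum_power2_eq_zero_iff)
  then show ?thesis using ab by (simp add: complex_eq_iff)
qed

lemma lbr_scl: "lbr c (\<lambda>w. a * x w) y = (\<lambda>w. a * lbr c x y w)"
  by (rule ext) (simp add: lbr_def tmult_def sum_distrib_left algebra_simps)
lemma lbr_scr: "lbr c x (\<lambda>w. a * y w) = (\<lambda>w. a * lbr c x y w)"
  by (rule ext) (simp add: lbr_def tmult_def sum_distrib_left algebra_simps)

lemma fN_sum: "finite I \<Longrightarrow> (\<And>i. i \<in> I \<Longrightarrow> f i \<in> freeNil c g) \<Longrightarrow>
   (\<lambda>w. \<Sum>i\<in>I. a i * f i w) \<in> freeNil c g"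
proof (induction I rule: finite_induct)
  case empty then show ?case using freeNil.zero_in by simp
next
  case (insert i I)
  have "(\<lambda>w. a i * f i w) \<in> freeNil c g" using insert by (intro freeNil.smult_in) auto
  then show ?case using insert freeNil.add_in[of "\<lambda>w. a i * f i w" c g "\<lambda>w. \<Sum>i\<in>I. a i * f i w"]
    by simp
qed

locale pp =
  fixes c g :: nat and P :: "tpoly \<Rightarrow> tpoly" and m :: nat
  assumes cl: "x \<in> freeNil c g \<Longrightarrow> P x \<in> freeNil c g"
  and lin: "x \<in> freeNil c g \<Longrightarrow> y \<in> freeNil c g \<Longrightarrow>
        P (\<lambda>w. a * x w + b * y w) = (\<lambda>w. a * P x w + b * P y w)"
  and pd: "x \<in> freeNil c g \<Longrightarrow> y \<in> freeNil c g \<Longrightarrow> z \<in> freeNil c g \<Longrightarrow>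
        P (lbr c x (lbr c y z)) =
          (\<lambda>w. lbr c (P x) (lbr c y z) w + lbr c x (lbr c (P y) z) w
                  + lbr c x (lbr c y (P z)) w)"
  and m1: "m \<ge> 1" and per: "x \<in> freeNil c g \<Longrightarrow> (P ^^ m) x = x"
begin

abbreviation "L \<equiv> freeNil c g"

lemma Psc: "x \<in> L \<Longrightarrow> P (\<lambda>w. a * x w) = (\<lambda>w. a * P x w)"
  using lin[of x x a 0] by simp

lemma Pzero: "P (\<lambda>w. 0) = (\<lambda>w. 0)"
  using Psc[OF freeNil.zero_in, of 0] by simp

lemma Psum: "finite I \<Longrightarrow> (\<And>i. i \<in> I \<Longrightarrow> f i \<in> L) \<Longrightarrow>
   P (\<lambda>w. \<Sum>i\<in>I. a i * f i w) = (\<lambda>w. \<Sum>i\<in>I. a i * P (f i) w)"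
proof (induction I rule: finite_induct)
  case empty then show ?case using Pzero by simp
next
  case (insert i I)
  have s: "(\<lambda>w. \<Sum>i\<in>I. a i * f i w) \<in> L" using insert by (intro fN_sum) auto
  have "P (\<lambda>w. \<Sum>i\<in>insert i I. a i * f i w) = P (\<lambda>w. a i * f i w + 1 * (\<Sum>i\<in>I. a i * f i w))"
    using insert by simp
  also have "\<dots> = (\<lambda>w. a i * P (f i) w + 1 * P (\<lambda>w. \<Sum>i\<in>I. a i * f i w) w)"
    using insert s by (intro lin) auto
  finally show ?case using insert by simp
qed

lemma Qcl: "x \<in> L \<Longrightarrow> (P ^^ j) x \<in> L"
  by (induction j) (auto intro: cl)

definition R :: "complex set" where "R = {z. z ^ m = 1}"

lemma finR: "finite R" unfolding R_def using finite_roots_unity[OF m1] by simp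

lemma normR: "z \<in> R \<Longrightarrow> norm z = 1"
proof -
  assume "z \<in> R"
  then have "z ^ m = 1" by (simp add: R_def)
  then have "norm (z ^ m) = 1" by simp
  then have "norm z ^ m = 1 ^ m" by (simp add: norm_power)
  then show "norm z = 1" using m1 power_eq_iff_eq_base[of m "norm z" 1] by simp
qed

definition E :: "complex \<Rightarrow> tpoly \<Rightarrow> tpoly" where
  "E z x = (\<lambda>w. \<Sum>j<m. (z ^ (m - j) / of_nat m) * (P ^^ j) x w)"

definition eig :: "complex \<Rightarrow> tpoly \<Rightarrow> bool" where
  "eig s x \<longleftrightarrow> x \<in> L \<and> P x = (\<lambda>w. s * x w)"

lemma E_L: "x \<in> L \<Longrightarrow> E z x \<in> L"
  unfolding E_def by (intro fN_sum Qcl) auto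

lemma Q_Suc: "(P ^^ Suc j) x = P ((P ^^ j) x)" by simp

lemma E_eig: assumes z: "z \<in> R" and x: "x \<in> L" shows "P (E z x) = (\<lambda>w. z * E z x w)"
proof -
  obtain n where n: "m = Suc n" using m1 by (cases m) auto
  have zm: "z ^ m = 1" using z by (simp add: R_def)
  have "P (E z x) = (\<lambda>w. \<Sum>j<m. (z ^ (m - j) / of_nat m) * P ((P ^^ j) x) w)"
    unfolding E_def using x by (intro Psum Qcl) auto
  also have "\<dots> = (\<lambda>w. z * E z x w)"
  proof
    fix w
    define F where "F j = (P ^^ j) x w" for j
    have F: "P ((P ^^ j) x) w = F (Suc j)" for j by (simp add: F_def)
    have Fm: "F (Suc n) = F 0" using per[OF x] by (simp add: F_def n del: funpow.simps)
    have zz: "z * z ^ (n - j) = z ^ (Suc n - j)" if "j < n" for j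
      using that by (simp add: Suc_diff_le)
    have "(\<Sum>j<m. (z ^ (m - j) / of_nat m) * P ((P ^^ j) x) w)
        = (\<Sum>j<Suc n. (z ^ (Suc n - j) / of_nat m) * F (Suc j))" by (simp only: F n)
    also have "\<dots> = (\<Sum>j<n. (z ^ (Suc n - j) / of_nat m) * F (Suc j)) + (z / of_nat m) * F 0"
      by (simp add: Fm)
    also have "(\<Sum>j<n. (z ^ (Suc n - j) / of_nat m) * F (Suc j)) = (\<Sum>j<n. z * ((z ^ (n - j) / of_nat m) * F (Suc j)))"
      by (intro sum.cong refl) (simp add: zz[symmetric])
    also have "(z / of_nat m) * F 0 = z * ((z ^ Suc n / of_nat m) * F 0)" using zm by (simp add: n)
    also have "(\<Sum>j<n. z * ((z ^ (n - j) / of_nat m) * F (Suc j))) + z * ((z ^ Suc n / of_nat m) * F 0)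
       = z * (\<Sum>j<Suc n. (z ^ (Suc n - j) / of_nat m) * F j)"
      by (simp add: sum.lessThan_Suc_shift sum_distrib_left del: sum.lessThan_Suc) (simp add: algebra_simps sum_distrib_left)
    also have "\<dots> = z * E z x w" unfolding E_def F_def by (simp only: n)
    finally show "(\<Sum>j<m. (z ^ (m - j) / of_nat m) * P ((P ^^ j) x) w) = z * E z x w" .
  qed
  finally show ?thesis .
qed

lemma E_sum: assumes x: "x \<in> L" shows "(\<Sum>z\<in>R. E z x w) = x w"
proof -
  obtain n where n: "m = Suc n" using m1 by (cases m) auto
  have "(\<Sum>z\<in>R. E z x w) = (\<Sum>j<m. (\<Sum>z\<in>R. z ^ (m - j)) / of_nat m * (P ^^ j) x w)"
    unfolding E_def by (simp add: sum.swap[of _ R] sum_distrib_right sum_divide_distrib)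
  also have "\<dots> = (\<Sum>z\<in>R. z ^ m) / of_nat m * x w
      + (\<Sum>j<n. (\<Sum>z\<in>R. z ^ (m - Suc j)) / of_nat m * (P ^^ Suc j) x w)"
    by (simp add: n sum.lessThan_Suc_shift del: sum.lessThan_Suc funpow.simps)
  also have "(\<Sum>j<n. (\<Sum>z\<in>R. z ^ (m - Suc j)) / of_nat m * (P ^^ Suc j) x w) = 0"
  proof -
    have h: "(\<Sum>z\<in>R. z ^ (m - Suc j)) = 0" if "j < n" for j
      unfolding R_def by (rule roots_sum) (use that n in auto)
    show ?thesis by (intro sum.neutral ballI) (simp add: h)
  qed
  also have "(\<Sum>z\<in>R. z ^ m) = of_nat m" unfolding R_def using m1 by (intro roots_sum_m) auto
  finally show ?thesis using m1 by simp
qed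

lemma E_eigen: "z \<in> R \<Longrightarrow> x \<in> L \<Longrightarrow> eig z (E z x)"
  by (simp add: eig_def E_L E_eig)

lemma T_eig: assumes "eig a x" "eig b y" "eig d z"
  shows "eig (a + b + d) (lbr c x (lbr c y z))"
proof -
  have L: "x \<in> L" "y \<in> L" "z \<in> L" and Pe: "P x = (\<lambda>w. a * x w)" "P y = (\<lambda>w. b * y w)" "P z = (\<lambda>w. d * z w)"
    using assms by (auto simp: eig_def)
  have "P (lbr c x (lbr c y z)) = (\<lambda>w. (a + b + d) * lbr c x (lbr c y z) w)"
    using pd[OF L] by (simp add: Pe lbr_scl lbr_scr algebra_simps)
  then show ?thesis using L by (simp add: eig_def freeNil.br_in)
qed

lemma eig_pow: "eig s x \<Longrightarrow> (P ^^ j) x = (\<lambda>w. s ^ j * x w)"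
proof (induction j)
  case (Suc j)
  then have "(P ^^ Suc j) x = P (\<lambda>w. s ^ j * x w)" by simp
  also have "\<dots> = (\<lambda>w. s ^ j * P x w)" using Suc.prems by (intro Psc) (simp add: eig_def)
  finally show ?case using Suc.prems by (simp add: eig_def algebra_simps)
qed simp

lemma eig_norm: assumes "eig s x" "x w \<noteq> 0" shows "norm s = 1"
proof -
  have "x = (\<lambda>w. s ^ m * x w)" using per[of x] eig_pow[OF assms(1), of m] assms(1) by (simp add: eig_def)
  then have "x w = s ^ m * x w" by (metis)
  then have "s ^ m = 1" using assms(2) by simp
  then show ?thesis using normR by (simp add: R_def)
qed

lemma eig_normR: "z \<in> R \<Longrightarrow> norm z = 1" by (rule normR)

lemma T_nz: assumes "eig a x" "eig b y" "eig d z" "lbr c x (lbr c y z) w \<noteq> 0"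
  shows "norm (a + b + d) = 1"
  using eig_norm[OF T_eig[OF assms(1-3)] assms(4)] .

lemma pair: assumes c3: "3 \<le> c" and u: "eig a u" and v: "eig b v" and ab: "a \<in> R" "b \<in> R"
  and d: "u[i]*v[j] - u[j]*v[i] \<noteq> 0"
  shows "b = - a"
proof -
  have nil: "u [] = 0" "v [] = 0" using u v by (auto simp: eig_def fN_nil)
  have t1: "lbr c u (lbr c u v) [i,i,j] = u[i] * (u[i]*v[j] - u[j]*v[i])"
    using T3[of c u u v i i j, OF c3 nil(1) nil(1) nil(2)] by (simp add: algebra_simps)
  have t2: "lbr c u (lbr c u v) [j,j,i] = - u[j] * (u[i]*v[j] - u[j]*v[i])"
    using T3[of c u u v j j i, OF c3 nil(1) nil(1) nil(2)] by (simp add: algebra_simps)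
  have "u[i] \<noteq> 0 \<or> u[j] \<noteq> 0" using d by auto
  then obtain w where "lbr c u (lbr c u v) w \<noteq> 0" using t1 t2 d by (metis mult_eq_0_iff neg_equal_0_iff_equal)
  then have "norm (a + a + b) = 1" by (rule T_nz[OF u u v])
  then show ?thesis using unit_lemma normR ab by blast
qed

lemma sum_single_zero: assumes "finite A" "(\<Sum>x\<in>A. f x) = (0::complex)" "\<And>x. x \<in> A \<Longrightarrow> f x \<noteq> 0 \<Longrightarrow> x = k"
  and x: "x \<in> A" shows "f x = 0"
proof -
  have "(\<Sum>x\<in>A. f x) = (\<Sum>x\<in>A \<inter> {k}. f x)"
    using assms by (intro sum.mono_neutral_right) auto
  then show "f x = 0" using assms x by (cases "k \<in> A") (auto simp: Int_absorb2)
qed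

lemma pick2: assumes "2 \<le> g"
  shows "\<exists>a\<in>R. \<exists>b\<in>R. E a (gen 0) [0] * E b (gen 1) [1] - E a (gen 0) [1] * E b (gen 1) [0] \<noteq> 0"
proof (rule ccontr)
  assume "\<not> ?thesis"
  then have z: "\<forall>a\<in>R. \<forall>b\<in>R. E a (gen 0) [0] * E b (gen 1) [1] - E a (gen 0) [1] * E b (gen 1) [0] = 0" by auto
  have g: "gen 0 \<in> L" "gen 1 \<in> L" using assms by (auto intro: freeNil.gen_in)
  have "(\<Sum>a\<in>R. \<Sum>b\<in>R. E a (gen 0) [0] * E b (gen 1) [1] - E a (gen 0) [1] * E b (gen 1) [0])
     = (\<Sum>a\<in>R. E a (gen 0) [0]) * (\<Sum>b\<in>R. E b (gen 1) [1]) - (\<Sum>a\<in>R. E a (gen 0) [1]) * (\<Sum>b\<in>R. E b (gen 1) [0])"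
    by (simp add: sum_subtractf sum_product)
  also have "\<dots> = 1" using E_sum[OF g(1)] E_sum[OF g(2)] by (simp add: gen_def)
  finally show False using z by simp
qed

definition det3 :: "tpoly \<Rightarrow> tpoly \<Rightarrow> tpoly \<Rightarrow> complex" where
  "det3 x y z = x[0] * y[1] * z[2] - x[0] * y[2] * z[1] - x[1] * y[0] * z[2]
     + x[1] * y[2] * z[0] + x[2] * y[0] * z[1] - x[2] * y[1] * z[0]"

lemma pick3: assumes "3 \<le> g"
  shows "\<exists>a\<in>R. \<exists>b\<in>R. \<exists>d\<in>R. det3 (E a (gen 0)) (E b (gen 1)) (E d (gen 2)) \<noteq> 0"
proof (rule ccontr)
  assume "\<not> ?thesis"
  then have z: "\<forall>a\<in>R. \<forall>b\<in>R. \<forall>d\<in>R. det3 (E a (gen 0)) (E b (gen 1)) (E d (gen 2)) = 0" by auto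
  have g: "gen 0 \<in> L" "gen 1 \<in> L" "gen 2 \<in> L" using assms by (auto intro: freeNil.gen_in)
  define X where "X a = E a (gen 0)" for a
  define Y where "Y a = E a (gen 1)" for a
  define Z where "Z a = E a (gen 2)" for a
  have tri: "(\<Sum>a\<in>R. \<Sum>b\<in>R. \<Sum>d\<in>R. X a [i] * Y b [j] * Z d [k])
      = (\<Sum>a\<in>R. X a [i]) * (\<Sum>b\<in>R. Y b [j]) * (\<Sum>d\<in>R. Z d [k])" for i j k
  proof -
    have "\<And>a. X a [i] * ((\<Sum>b\<in>R. Y b [j]) * (\<Sum>d\<in>R. Z d [k])) = (\<Sum>b\<in>R. \<Sum>d\<in>R. X a [i] * (Y b [j] * Z d [k]))"
      unfolding sum_product by (simp only: sum_distrib_left)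
    then show ?thesis by (simp add: sum_distrib_right mult.assoc)
  qed
  have "(\<Sum>a\<in>R. \<Sum>b\<in>R. \<Sum>d\<in>R. det3 (X a) (Y b) (Z d))
     = det3 (\<lambda>w. \<Sum>a\<in>R. X a w) (\<lambda>w. \<Sum>b\<in>R. Y b w) (\<lambda>w. \<Sum>d\<in>R. Z d w)"
    unfolding det3_def by (simp only: sum_subtractf sum.distrib tri)
  also have "\<dots> = 1" unfolding X_def Y_def Z_def using E_sum[OF g(1)] E_sum[OF g(2)] E_sum[OF g(3)]
    by (simp add: gen_def det3_def)
  finally show False using z by (simp add: X_def Y_def Z_def)
qed

lemma det3_pairs:
  assumes "det3 x y z \<noteq> 0"
  shows "\<exists>i j. x[i]*y[j] - x[j]*y[i] \<noteq> 0" "\<exists>i j. x[i]*z[j] - x[j]*z[i] \<noteq> 0"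
     "\<exists>i j. y[i]*z[j] - y[j]*z[i] \<noteq> 0"
proof -
  have e1: "det3 x y z = z[2]*(x[0]*y[1]-x[1]*y[0]) - z[1]*(x[0]*y[2]-x[2]*y[0]) + z[0]*(x[1]*y[2]-x[2]*y[1])"
    by (simp add: det3_def algebra_simps)
  have e2: "det3 x y z = - y[2]*(x[0]*z[1]-x[1]*z[0]) + y[1]*(x[0]*z[2]-x[2]*z[0]) - y[0]*(x[1]*z[2]-x[2]*z[1])"
    by (simp add: det3_def algebra_simps)
  have e3: "det3 x y z = x[2]*(y[0]*z[1]-y[1]*z[0]) - x[1]*(y[0]*z[2]-y[2]*z[0]) + x[0]*(y[1]*z[2]-y[2]*z[1])"
    by (simp add: det3_def algebra_simps)
  show "\<exists>i j. x[i]*y[j] - x[j]*y[i] \<noteq> 0" using assms e1 by (metis mult_zero_right diff_zero add_0 diff_self)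
  show "\<exists>i j. x[i]*z[j] - x[j]*z[i] \<noteq> 0" using assms e2 by (metis mult_zero_right diff_zero add_0 diff_self neg_0_equal_iff_equal)
  show "\<exists>i j. y[i]*z[j] - y[j]*z[i] \<noteq> 0" using assms e3 by (metis mult_zero_right diff_zero add_0 diff_self)
qed

lemma no_g3: assumes "3 \<le> c" "3 \<le> g" shows False
proof -
  obtain a b d where abd: "a \<in> R" "b \<in> R" "d \<in> R"
    and dt: "det3 (E a (gen 0)) (E b (gen 1)) (E d (gen 2)) \<noteq> 0" using pick3[OF assms(2)] by blast
  have g: "gen 0 \<in> L" "gen 1 \<in> L" "gen 2 \<in> L" using assms by (auto intro: freeNil.gen_in)
  have ei: "eig a (E a (gen 0))" "eig b (E b (gen 1))" "eig d (E d (gen 2))"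
    using E_eigen abd g by auto
  note pr = det3_pairs[OF dt]
  have "b = - a" using pr(1) pair[OF assms(1) ei(1) ei(2) abd(1,2)] by blast
  moreover have "d = - a" using pr(2) pair[OF assms(1) ei(1) ei(3) abd(1,3)] by blast
  moreover have "d = - b" using pr(3) pair[OF assms(1) ei(2) ei(3) abd(2,3)] by blast
  ultimately have "a = 0" by simp
  then show False using normR[OF abd(1)] by simp
qed

lemma no_g2: assumes c4: "4 \<le> c" and g2: "g = 2" shows False
proof -
  have c3: "3 \<le> c" and c2: "2 \<le> c" using c4 by auto
  obtain a b where ab: "a \<in> R" "b \<in> R"
    and D: "E a (gen 0) [0] * E b (gen 1) [1] - E a (gen 0) [1] * E b (gen 1) [0] \<noteq> 0"
    using pick2 g2 by auto
  define u where "u = E a (gen 0)"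
  define v where "v = E b (gen 1)"
  have g: "gen 0 \<in> L" "gen 1 \<in> L" using g2 by (auto intro: freeNil.gen_in)
  have eu: "eig a u" and ev: "eig b v" using E_eigen ab g by (auto simp: u_def v_def)
  have uL: "u \<in> L" and vL: "v \<in> L" using eu ev by (auto simp: eig_def)
  have D': "u[0]*v[1] - u[1]*v[0] \<noteq> 0" using D by (simp add: u_def v_def)
  have hb: "b = - a" using pair[OF c3 eu ev ab D'] .
  have na: "a \<noteq> 0" using normR[OF ab(1)] by auto
  define l where "l = lbr c u v"
  have lL: "l \<in> L" using uL vL by (simp add: l_def freeNil.br_in)
  have unil: "u [] = 0" "v [] = 0" using uL vL by (auto simp: fN_nil)
  have l1: "l [k] = 0" for k using unil c2 by (simp add: l_def lbr_tm)
  have l01: "l [0,1] = u[0]*v[1] - v[0]*u[1]" using unil c2 by (simp add: l_def lbr_tm)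
  define p where "p z = E z l" for z
  have ep: "z \<in> R \<Longrightarrow> eig z (p z)" for z using E_eigen lL by (simp add: p_def)
  have pL: "z \<in> R \<Longrightarrow> p z \<in> L" for z using ep by (simp add: eig_def)
  have psum: "(\<Sum>z\<in>R. p z w) = l w" for w using E_sum[OF lL] by (simp add: p_def)
  have s0: "u[0] * p z [1] - u[1] * p z [0] = 0" if zR: "z \<in> R" for z
  proof (rule sum_single_zero[of R "\<lambda>z. u[0] * p z [1] - u[1] * p z [0]" "-a" z, OF finR _ _ zR])
    show "(\<Sum>z\<in>R. u[0] * p z [1] - u[1] * p z [0]) = 0"
      by (simp add: sum_subtractf sum_distrib_left[symmetric] psum l1)
    show "z = - a" if "z \<in> R" "u[0] * p z [1] - u[1] * p z [0] \<noteq> 0" for z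
      using pair[OF c3 eu ep[OF that(1)] ab(1) that(1) that(2)] .
  qed
  have t0: "v[0] * p z [1] - v[1] * p z [0] = 0" if zR: "z \<in> R" for z
  proof (rule sum_single_zero[of R "\<lambda>z. v[0] * p z [1] - v[1] * p z [0]" "-b" z, OF finR _ _ zR])
    show "(\<Sum>z\<in>R. v[0] * p z [1] - v[1] * p z [0]) = 0"
      by (simp add: sum_subtractf sum_distrib_left[symmetric] psum l1)
    show "z = - b" if "z \<in> R" "v[0] * p z [1] - v[1] * p z [0] \<noteq> 0" for z
      using pair[OF c3 ev ep[OF that(1)] ab(2) that(1) that(2)] .
  qed
  have p1: "p z [0] = 0 \<and> p z [1] = 0" if z: "z \<in> R" for z
  proof -
    have "p z [0] * (u[0]*v[1] - u[1]*v[0]) = - u[0] * (v[0] * p z [1] - v[1] * p z [0]) + v[0] * (u[0] * p z [1] - u[1] * p z [0])"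
      by (simp add: algebra_simps)
    moreover have "p z [1] * (u[0]*v[1] - u[1]*v[0]) = - u[1] * (v[0] * p z [1] - v[1] * p z [0]) + v[1] * (u[0] * p z [1] - u[1] * p z [0])"
      by (simp add: algebra_simps)
    ultimately show ?thesis using s0[OF z] t0[OF z] D' by simp
  qed
  have uu: "u[0] \<noteq> 0 \<or> u[1] \<noteq> 0" "v[0] \<noteq> 0 \<or> v[1] \<noteq> 0" using D' by auto
  have q0: "p z [0,1] = 0" if z: "z \<in> R" for z
  proof (rule ccontr)
    assume gz: "p z [0,1] \<noteq> 0"
    have pn: "p z [] = 0" using pL[OF z] by (simp add: fN_nil)
    have an: "p z [0,0] = 0" "p z [1,1] = 0" "p z [1,0] = - p z [0,1]"
      using fN_anti[OF pL[OF z] c2, of 0 0] fN_anti[OF pL[OF z] c2, of 1 1] fN_anti[OF pL[OF z] c2, of 1 0]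
      by auto
    have T4u: "lbr c u (lbr c u (p z)) [0,0,0,1] = u[0]*u[0]*p z [0,1]"
          "lbr c u (lbr c u (p z)) [1,1,1,0] = - u[1]*u[1]*p z [0,1]"
      using c4 unil pn p1[OF z] an by (simp_all add: lbr_tm algebra_simps)
    have T4v: "lbr c v (lbr c v (p z)) [0,0,0,1] = v[0]*v[0]*p z [0,1]"
          "lbr c v (lbr c v (p z)) [1,1,1,0] = - v[1]*v[1]*p z [0,1]"
      using c4 unil pn p1[OF z] an by (simp_all add: lbr_tm algebra_simps)
    obtain w1 where "lbr c u (lbr c u (p z)) w1 \<noteq> 0" using T4u uu(1) gz by (metis mult_eq_0_iff neg_equal_0_iff_equal)
    then have "norm (a + a + z) = 1" by (rule T_nz[OF eu eu ep[OF z]])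
    then have za: "z = - a" using unit_lemma normR ab(1) z by blast
    obtain w2 where "lbr c v (lbr c v (p z)) w2 \<noteq> 0" using T4v uu(2) gz by (metis mult_eq_0_iff neg_equal_0_iff_equal)
    then have "norm (b + b + z) = 1" by (rule T_nz[OF ev ev ep[OF z]])
    then have "z = - b" using unit_lemma normR ab(2) z by blast
    then show False using za hb na by simp
  qed
  have "(\<Sum>z\<in>R. p z [0,1]) = 0" using q0 by simp
  then show False using psum[of "[0,1]"] l01 D' by (simp add: algebra_simps)
qed

end

theorem corollary5p20:
  fixes c g :: nat
  assumes "c \<ge> 1" and "g \<ge> 2"
  shows "(\<exists>P. periodic_prederivation c g P) \<longleftrightarrow> (c \<le> 2 \<or> (c = 3 \<and> g = 2))"
proof
  assume "\<exists>P. periodic_prederivation c g P"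
  then obtain P m where pd: "prederivation c g P" and m: "m \<ge> 1" "\<forall>x\<in>freeNil c g. (P ^^ m) x = x"
    unfolding periodic_prederivation_def by blast
  interpret pp c g P m
    using pd m unfolding prederivation_def by unfold_locales auto
  show "c \<le> 2 \<or> (c = 3 \<and> g = 2)"
  proof (rule ccontr)
    assume "\<not> (c \<le> 2 \<or> (c = 3 \<and> g = 2))"
    then have "3 \<le> c" "c \<noteq> 3 \<or> g \<noteq> 2" by auto
    show False
    proof (cases "3 \<le> g")
      case True
      then show False using no_g3 \<open>3 \<le> c\<close> by blast
    next
      case False
      then have "g = 2" using assms(2) by simp
      then have "4 \<le> c" using \<open>3 \<le> c\<close> \<open>c \<noteq> 3 \<or> g \<noteq> 2\<close> by simp
      then show False using no_g2 \<open>g = 2\<close> by blast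
    qed
  qed
next
  assume "c \<le> 2 \<or> (c = 3 \<and> g = 2)"
  then show "\<exists>P. periodic_prederivation c g P"
  proof
    assume "c \<le> 2" then show ?thesis using if_c2 by blast
  next
    assume "c = 3 \<and> g = 2" then show ?thesis using if_c3 by blast
  qed
qed

end
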